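(* Assume $B$ is connected and let $n\ge1$. For a $\mathbb{K}$-linear map $\varphi\colon A\to B$ the following are equivalent: (i) for every $a\in A$, $R_\varphi(a,z)$ is a polynomial in $z$ of degree at most $n$, and it has degree exactly $n$ for some $a\in A$; (ii) $\varphi$ is a Frobenius $n$-homomorphism.
   Context: $\mathbb{K}=\mathbb{R}$ or $\mathbb{C}$; $A$ and $B$ are commutative associative unital $\mathbb{K}$-algebras. For a $\mathbb{K}$-linear map $\varphi\colon A\to B$ and $a\in A$, the characteristic function is $R_\varphi(a,z)=\exp\bigl(\varphi(\ln(1+az))\bigr)=1+\sum_{k\ge1}\psi_k(a)z^k\in B[[z]]$, with $\ln(1+az)=\sum_{k\ge1}(-1)^{k+1}a^kz^k/k$ and $\varphi$ applied coefficientwise. The Frobenius maps $\Phi_k\colon A^k\to B$ of $\varphi$ are defined by $\Phi_1=\varphi$ and $\Phi_{k+1}(a_1,\dots,a_{k+1})=\varphi(a_1)\Phi_k(a_2,\dots,a_{k+1})-\sum_{j=2}^{k+1}\Phi_k(a_2,\dots,a_{j-1},a_1a_j,a_{j+1},\dots,a_{k+1})$. A linear map $\varphi$ is a (Frobenius) $n$-homomorphism if $\varphi(1)=n\cdot1_B$ and $\Phi_k\equiv0$ for all $k\ge n+1$. The algebra $B$ is connected if for every $b\in B$ and $k\ge0$, $b(b-1)\cdots(b-k)=0$ implies $b=j\cdot1_B$ for some $j\in\{0,\dots,k\}$. *)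

theory Defs
  imports Complex_Main "HOL-Computational_Algebra.Formal_Power_Series"
    "HOL-Computational_Algebra.Polynomial_FPS"
begin

text \<open>Algebras over the reals: commutative unital rings that are real algebras.
  (A complex algebra is in particular a real algebra and complex-linear maps are
  real-linear, so the real case covers both choices of the scalar field.)\<close>

text \<open>The formal logarithm series: ln(1 + a z) = sum_{k>=1} (-1)^(k+1) a^k z^k / k,
  with phi applied coefficientwise.\<close>
definition phi_ln_series :: "('a::{comm_ring_1,real_algebra_1} \<Rightarrow> 'b::{comm_ring_1,real_algebra_1}) \<Rightarrow> 'a \<Rightarrow> 'b fps" where
  "phi_ln_series \<phi> a =
     Abs_fps (\<lambda>k. if k = 0 then 0
                   else \<phi> (scaleR ((-1) ^ (k + 1) / real k) (a ^ k)))"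

text \<open>Formal exponential of a power series with vanishing constant term:
  exp f = sum_m f^m / m!  (the coefficient of z^k only involves m <= k).\<close>
definition fps_exp_series :: "'b::{comm_ring_1,real_algebra_1} fps \<Rightarrow> 'b fps" where
  "fps_exp_series f = Abs_fps (\<lambda>k. \<Sum>m\<le>k. scaleR (1 / fact m) (fps_nth (f ^ m) k))"

definition char_fun :: "('a::{comm_ring_1,real_algebra_1} \<Rightarrow> 'b::{comm_ring_1,real_algebra_1}) \<Rightarrow> 'a \<Rightarrow> 'b fps" where
  "char_fun \<phi> a = fps_exp_series (phi_ln_series \<phi> a)"

text \<open>Frobenius maps: frob phi [a1,...,ak] = Phi_k(a1,...,ak) (for k >= 1);
  the empty list gets the value 1 (unused by the definitions).\<close>
function frob :: "('a::comm_ring_1 \<Rightarrow> 'b::comm_ring_1) \<Rightarrow> 'a list \<Rightarrow> 'b" where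
  "frob \<phi> [] = 1"
| "frob \<phi> [a] = \<phi> a"
| "frob \<phi> (a # b # as) =
     \<phi> a * frob \<phi> (b # as)
     - (\<Sum>j<length (b # as). frob \<phi> ((b # as)[j := a * (b # as) ! j]))"
  by pat_completeness auto
termination
  by (relation "measure (\<lambda>(f, xs). length xs)") (auto split: nat.split)

definition frobenius_hom :: "nat \<Rightarrow> ('a::comm_ring_1 \<Rightarrow> 'b::comm_ring_1) \<Rightarrow> bool" where
  "frobenius_hom n \<phi> \<longleftrightarrow>
     \<phi> 1 = of_nat n \<and> (\<forall>xs. length xs \<ge> n + 1 \<longrightarrow> frob \<phi> xs = 0)"

definition connected_alg :: "'b::comm_ring_1 itself \<Rightarrow> bool" where
  "connected_alg _ \<longleftrightarrow>
     (\<forall>(b::'b) (k::nat). (\<Prod>i\<le>k. b - of_nat i) = 0 \<longrightarrow> (\<exists>j\<le>k. b = of_nat j))"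

end

theory Submission
  imports Defs
begin

unbundle fps_syntax


lemma frob_rec:
  "frob \<phi> (a # r) = \<phi> a * frob \<phi> r - (\<Sum>j<length r. frob \<phi> (r[j := a * r ! j]))"
  by (cases r) simp_all

lemma upd_upd_comm:
  fixes r :: "'a::comm_ring_1 list"
  assumes "j < length r" "l < length r"
  shows "(r[j := a * r ! j])[l := b * (r[j := a * r ! j]) ! l]
       = (r[l := b * r ! l])[j := a * (r[l := b * r ! l]) ! j]"
proof (cases "j = l")
  case True then show ?thesis using assms by (simp add: mult.left_commute)
next
  case False then show ?thesis using assms by (simp add: list_update_swap)
qed

lemma frob_swap01: "frob \<phi> (a # b # r) = frob \<phi> (b # a # r)"
proof -
  define n where "n = length r"
  define DD where "DD a b = (\<Sum>j<n. \<Sum>l<n. frob \<phi> ((r[j := a * r ! j])[l := b * (r[j := a * r ! j]) ! l]))" for a b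
  have DD: "DD a b = DD b a"
  proof -
    have "DD a b = (\<Sum>l<n. \<Sum>j<n. frob \<phi> ((r[l := b * r ! l])[j := a * (r[l := b * r ! l]) ! j]))"
      unfolding DD_def n_def by (subst sum.swap) (intro sum.cong refl, simp add: upd_upd_comm)
    then show ?thesis unfolding DD_def by simp
  qed
  have e: "frob \<phi> (a # b # r) = \<phi> a * (\<phi> b * frob \<phi> r - (\<Sum>l<n. frob \<phi> (r[l := b * r ! l])))
     - (\<phi> (a*b) * frob \<phi> r - (\<Sum>l<n. frob \<phi> (r[l := (a*b) * r ! l])))
     - (\<phi> b * (\<Sum>j<n. frob \<phi> (r[j := a * r ! j])) - DD a b)" for a b
  proof -
    have "frob \<phi> (a # b # r) = \<phi> a * frob \<phi> (b # r) - (frob \<phi> (a*b # r) + (\<Sum>j<n. frob \<phi> (b # r[j := a * r ! j])))"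
    proof -
      have "(\<Sum>j<length (b#r). frob \<phi> ((b#r)[j := a * (b#r)!j])) = frob \<phi> (a*b # r) + (\<Sum>j<n. frob \<phi> (b # r[j := a * r ! j]))"
        by (simp only: length_Cons sum.lessThan_Suc_shift n_def) simp
      then show ?thesis by (simp only: frob_rec[of \<phi> a "b # r"])
    qed
    also have "(\<Sum>j<n. frob \<phi> (b # r[j := a * r ! j])) = \<phi> b * (\<Sum>j<n. frob \<phi> (r[j := a * r ! j])) - DD a b"
      by (simp add: frob_rec[of \<phi> b] DD_def n_def sum_distrib_left sum_subtractf del: frob.simps)
    finally show ?thesis by (simp add: frob_rec n_def del: frob.simps)
  qed
  show ?thesis unfolding e[of a b] e[of b a] DD by (simp add: algebra_simps)
qed



lemma frob_mset: "mset xs = mset ys \<Longrightarrow> frob \<phi> xs = frob \<phi> ys"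
proof (induction "length xs" arbitrary: xs ys rule: less_induct)
  case less
  have tail: "frob \<phi> (c # r) = frob \<phi> (c # r')"
    if len: "length r < length xs" and mr: "mset r = mset r'" for c r r'
  proof -
    have lr: "length r' = length r" using mr by (metis size_mset)
    define f where "f rr x = frob \<phi> (c * x # remove1 x rr)" for rr x
    have s: "(\<Sum>j<length rr. frob \<phi> (rr[j := c * rr ! j])) = sum_mset (image_mset (f rr) (mset rr))"
      if "length rr = length r" for rr
    proof -
      have "(\<Sum>j<length rr. frob \<phi> (rr[j := c * rr ! j])) = (\<Sum>j<length rr. f rr (rr ! j))"
      proof (rule sum.cong[OF refl])
        fix j assume j: "j \<in> {..<length rr}"
        have "mset (rr[j := c * rr ! j]) = mset (c * rr ! j # remove1 (rr ! j) rr)"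
          using j by (simp add: mset_update mset_remove1)
        then show "frob \<phi> (rr[j := c * rr ! j]) = f rr (rr ! j)"
          unfolding f_def using less.hyps[of "rr[j := c * rr ! j]"] len that by simp
      qed
      also have "\<dots> = sum_list (map (f rr) rr)"
        by (simp add: sum_list_sum_nth atLeast0LessThan)
      also have "\<dots> = sum_mset (image_mset (f rr) (mset rr))"
        by (metis mset_map sum_mset_sum_list)
      finally show ?thesis .
    qed
    have ff: "image_mset (f r) (mset r) = image_mset (f r') (mset r)"
    proof (rule image_mset_cong)
      fix x assume x: "x \<in># mset r"
      then have "length (c * x # remove1 x r) = length r"
        by (simp add: length_remove1) (metis Suc_pred length_pos_if_in_set)
      then show "f r x = f r' x" unfolding f_def
        using less.hyps[of "c * x # remove1 x r" "c * x # remove1 x r'"] len mr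
        by (simp add: mset_remove1)
    qed
    have fr: "frob \<phi> r = frob \<phi> r'" using less.hyps[of r r'] len mr by simp
    show ?thesis
      unfolding frob_rec[of \<phi> c r] frob_rec[of \<phi> c r'] s[OF refl] s[OF lr] fr ff mr[symmetric] by simp
  qed
  show ?case
  proof (cases xs)
    case Nil then show ?thesis using less.prems by simp
  next
    case (Cons a r)
    then obtain b s where ys: "ys = b # s"
      using less.prems by (cases ys) auto
    show ?thesis
    proof (cases "a = b")
      case True
      then have "mset r = mset s" using less.prems Cons ys by simp
      moreover have "length r < length xs" using Cons by simp
      ultimately show ?thesis using tail[of r s a] Cons ys True by (simp del: frob.simps)
    next
      case False
      have "a \<in> set s" using less.prems Cons ys False
        by (metis list.set_intros(1) mset_eq_setD set_ConsD)
      then obtain s1 s2 where s: "s = s1 @ a # s2" by (meson split_list)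
      have ms: "mset r = mset (b # s1 @ s2)" using less.prems Cons ys s by simp
      have l1: "length (s1 @ a # s2) < length xs"
      proof -
        have "length ys = length xs" using less.prems by (metis size_mset)
        then show ?thesis using Cons ys s by simp
      qed
      have "frob \<phi> ys = frob \<phi> (b # a # s1 @ s2)"
        using tail[of "s1 @ a # s2" "a # s1 @ s2" b] l1 ys s by (simp del: frob.simps)
      also have "\<dots> = frob \<phi> (a # b # s1 @ s2)" by (rule frob_swap01)
      also have "\<dots> = frob \<phi> xs"
      proof -
        have "length (b # s1 @ s2) = length r" using ms by (metis size_mset)
        then show ?thesis using tail[of "b # s1 @ s2" r a] ms Cons by (simp del: frob.simps)
      qed
      finally show ?thesis by simp
    qed
  qed
qed



lemma frob_move: "i < length r \<Longrightarrow> frob \<phi> (r[i := v]) = frob \<phi> (v # take i r @ drop (Suc i) r)"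
  by (rule frob_mset) (simp add: upd_conv_take_nth_drop)

lemma frob_lin_head:
  fixes \<phi> :: "'a::{comm_ring_1,real_algebra_1} \<Rightarrow> 'b::{comm_ring_1,real_algebra_1}"
  assumes lin: "linear \<phi>"
  shows "frob \<phi> ((x + y) # r) = frob \<phi> (x # r) + frob \<phi> (y # r) \<and>
         frob \<phi> ((c *\<^sub>R x) # r) = c *\<^sub>R frob \<phi> (x # r)"
proof (induction "length r" arbitrary: r x y c rule: less_induct)
  case less
  define d where "d j = take j r @ drop (Suc j) r" for j
  have ld: "j < length r \<Longrightarrow> length (d j) < length r" for j unfolding d_def by simp
  have A: "frob \<phi> (r[j := (x + y) * r ! j]) = frob \<phi> (r[j := x * r ! j]) + frob \<phi> (r[j := y * r ! j])"
    if "j < length r" for j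
    using that less.hyps[OF ld[OF that], of "x * r ! j" "y * r ! j"]
    by (simp add: frob_move d_def distrib_right del: frob.simps)
  have B: "frob \<phi> (r[j := (c *\<^sub>R x) * r ! j]) = c *\<^sub>R frob \<phi> (r[j := x * r ! j])"
    if "j < length r" for j
    using that less.hyps[OF ld[OF that], of "x * r ! j" _ c]
    by (simp add: frob_move d_def del: frob.simps)
  show ?case
  proof
    show "frob \<phi> ((x + y) # r) = frob \<phi> (x # r) + frob \<phi> (y # r)"
      unfolding frob_rec[of \<phi> _ r] using A
      by (simp add: real_vector.linear_add[OF lin] distrib_right sum.distrib del: frob.simps)
    show "frob \<phi> ((c *\<^sub>R x) # r) = c *\<^sub>R frob \<phi> (x # r)"
      unfolding frob_rec[of \<phi> _ r] using B
      by (simp add: linear_cmul[OF lin] scaleR_right_diff_distrib scaleR_sum_right del: frob.simps)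
  qed
qed



lemma ofnat_mult_eq0:
  fixes z :: "'b::{comm_ring_1,real_algebra_1}"
  assumes "of_nat n * z = 0" "n \<noteq> 0" shows "z = 0"
proof -
  have "real n *\<^sub>R z = 0" using assms(1) by (simp add: scaleR_conv_of_real)
  then show ?thesis using assms(2) by simp
qed

lemma ofreal_mult_eq0:
  fixes z :: "'b::{comm_ring_1,real_algebra_1}"
  assumes "of_real r * z = 0" "r \<noteq> 0" shows "z = 0"
proof -
  have "r *\<^sub>R z = 0" using assms(1) by (simp add: scaleR_conv_of_real)
  then show ?thesis using assms(2) by simp
qed

definition ff :: "nat \<Rightarrow> nat \<Rightarrow> nat" where "ff j k = (\<Prod>i<j. (k - i))"

lemma ff_Suc: "ff (Suc j) (Suc k) = Suc k * ff j k"
  unfolding ff_def prod.lessThan_Suc_shift by simp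

lemma frob_rep_upd: "j < Suc k \<Longrightarrow> frob \<phi> ((replicate (Suc k) a)[j := v]) = frob \<phi> (v # replicate k a)"
proof -
  assume j: "j < Suc k"
  have "mset ((replicate (Suc k) a)[j := v]) = add_mset v (mset (replicate (Suc k) a) - {#a#})"
    using mset_update[of j "replicate (Suc k) a" v] j by (simp del: replicate.simps)
  then show ?thesis by (intro frob_mset) (simp del: replicate.simps)
qed

lemma frob_b_rep:
  "frob \<phi> (b # replicate k a) =
     (\<Sum>j\<le>k. (-1)^j * of_nat (ff j k) * \<phi> (b * a^j) * frob \<phi> (replicate (k-j) a))"
proof (induction k arbitrary: b)
  case 0 then show ?case by (simp add: ff_def)
next
  case (Suc k)
  have "frob \<phi> (b # replicate (Suc k) a) = \<phi> b * frob \<phi> (replicate (Suc k) a)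
        - of_nat (Suc k) * frob \<phi> (b * a # replicate k a)"
  proof -
    have "(\<Sum>j<length (replicate (Suc k) a). frob \<phi> ((replicate (Suc k) a)[j := b * (replicate (Suc k) a) ! j]))
        = (\<Sum>j<Suc k. frob \<phi> (b * a # replicate k a))"
      by (rule sum.cong) (auto simp: frob_rep_upd simp del: frob.simps replicate.simps)
    then show ?thesis by (simp only: frob_rec[of \<phi> b]) (simp del: frob.simps replicate.simps)
  qed
  also have "\<dots> = (\<Sum>j\<le>Suc k. (-1)^j * of_nat (ff j (Suc k)) * \<phi> (b * a^j) * frob \<phi> (replicate (Suc k - j) a))"
    unfolding Suc.IH sum.atMost_Suc_shift
    by (simp add: ff_Suc sum_distrib_left ff_def[of 0] algebra_simps sum.distrib[symmetric] del: frob.simps replicate.simps)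
  finally show ?case .
qed

lemma frob_one_head: "frob \<phi> (1 # r) = (\<phi> 1 - of_nat (length r)) * frob \<phi> r"
  by (simp add: frob_rec[of \<phi> 1 r] algebra_simps del: frob.simps)

lemma frob_rep_one: "frob \<phi> (replicate k 1) = (\<Prod>i<k. (\<phi> 1 - of_nat i))"
  by (induction k) (simp, simp only: replicate_Suc frob_one_head length_replicate prod.lessThan_Suc, simp add: mult.commute del: frob.simps)

lemma poly_zero_real:
  fixes p :: "'b::{comm_ring_1,real_algebra_1} poly"
  assumes "infinite T" "\<forall>t\<in>T. poly p (of_real t) = 0" shows "p = 0"
  using assms
proof (induction "degree p" arbitrary: p T rule: less_induct)
  case less
  obtain t0 where t0: "t0 \<in> T" using less.prems(1) by (metis all_not_in_conv finite.emptyI)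
  show ?case
  proof (cases "degree p = 0")
    case True
    then obtain c where "p = [:c:]" by (meson degree_eq_zeroE)
    then show ?thesis using less.prems(2) t0 by auto
  next
    case False
    define q where "q = synthetic_div p (of_real t0)"
    have pq: "p = [:- of_real t0, 1:] * q"
      using synthetic_div_correct'[of "of_real t0" p] less.prems(2) t0 unfolding q_def by simp
    have dq: "degree q < degree p" using False unfolding q_def degree_synthetic_div by simp
    have "\<forall>t\<in>T - {t0}. poly q (of_real t) = 0"
    proof
      fix t assume t: "t \<in> T - {t0}"
      have "of_real (t - t0) * poly q (of_real t) = 0"
        using less.prems(2) t by (subst (asm) pq) (simp add: algebra_simps)
      then show "poly q (of_real t) = 0" using t ofreal_mult_eq0[of "t - t0" "poly q (of_real t)"] by simp
    qed
    moreover have "infinite (T - {t0})" using less.prems(1) by simp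
    ultimately have "q = 0" by (intro less.hyps[OF dq, of "T - {t0}"])
    then show ?thesis using pq by simp
  qed
qed

lemma frob_expand:
  fixes \<phi> :: "'a::{comm_ring_1,real_algebra_1} \<Rightarrow> 'b::{comm_ring_1,real_algebra_1}"
  assumes lin: "linear \<phi>"
  shows "\<exists>P. (\<forall>t. frob \<phi> (ys @ replicate p (x + t *\<^sub>R y)) = poly P (of_real t)) \<and>
             coeff P 0 = frob \<phi> (ys @ replicate p x) \<and>
             coeff P 1 = of_nat p * frob \<phi> (ys @ y # replicate (p - 1) x)"
proof (induction p arbitrary: ys)
  case 0
  show ?case by (rule exI[of _ "[:frob \<phi> ys:]"]) simp
next
  case (Suc p)
  obtain P1 where P1: "\<forall>t. frob \<phi> ((ys @ [x]) @ replicate p (x + t *\<^sub>R y)) = poly P1 (of_real t)"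
    "coeff P1 0 = frob \<phi> ((ys @ [x]) @ replicate p x)"
    "coeff P1 1 = of_nat p * frob \<phi> ((ys @ [x]) @ y # replicate (p - 1) x)"
    using Suc.IH[of "ys @ [x]"] by blast
  obtain P2 where P2: "\<forall>t. frob \<phi> ((ys @ [y]) @ replicate p (x + t *\<^sub>R y)) = poly P2 (of_real t)"
    "coeff P2 0 = frob \<phi> ((ys @ [y]) @ replicate p x)"
    "coeff P2 1 = of_nat p * frob \<phi> ((ys @ [y]) @ y # replicate (p - 1) x)"
    using Suc.IH[of "ys @ [y]"] by blast
  have mv: "frob \<phi> (ys @ replicate (Suc p) v) = frob \<phi> ((ys @ [v]) @ replicate p v)" for v
    by (rule frob_mset) simp
  have mv2: "frob \<phi> ((ys @ [v]) @ R) = frob \<phi> (v # ys @ R)" for v R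
    by (rule frob_mset) simp
  show ?case
  proof (intro exI[of _ "P1 + pCons 0 P2"] conjI allI)
    fix t
    have "frob \<phi> (ys @ replicate (Suc p) (x + t *\<^sub>R y))
        = frob \<phi> (x # ys @ replicate p (x + t *\<^sub>R y)) + t *\<^sub>R frob \<phi> (y # ys @ replicate p (x + t *\<^sub>R y))"
      unfolding mv mv2 using frob_lin_head[OF lin] by (simp del: frob.simps)
    also have "\<dots> = poly P1 (of_real t) + of_real t * poly P2 (of_real t)"
      using P1(1)[unfolded mv2] P2(1)[unfolded mv2] by (simp add: scaleR_conv_of_real del: frob.simps)
    finally show "frob \<phi> (ys @ replicate (Suc p) (x + t *\<^sub>R y)) = poly (P1 + pCons 0 P2) (of_real t)"
      by simp
  next
    show "coeff (P1 + pCons 0 P2) 0 = frob \<phi> (ys @ replicate (Suc p) x)"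
      using P1(2) mv[of x] by simp
  next
    have e: "frob \<phi> ((ys @ [x]) @ y # replicate (p - 1) x) = frob \<phi> (ys @ y # replicate p x)" if "p \<noteq> 0"
      by (rule frob_mset) (use that in \<open>cases p, auto\<close>)
    have e2: "frob \<phi> ((ys @ [y]) @ replicate p x) = frob \<phi> (ys @ y # replicate p x)" by simp
    show "coeff (P1 + pCons 0 P2) 1 = of_nat (Suc p) * frob \<phi> (ys @ y # replicate (Suc p - 1) x)"
      using P1(3) P2(2) e e2 by (cases "p = 0") (auto simp: coeff_pCons algebra_simps)
  qed
qed

lemma frob_polar:
  fixes \<phi> :: "'a::{comm_ring_1,real_algebra_1} \<Rightarrow> 'b::{comm_ring_1,real_algebra_1}"
  assumes lin: "linear \<phi>" and diag: "\<forall>x. frob \<phi> (replicate k x) = 0"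
  shows "length xs = k \<Longrightarrow> frob \<phi> xs = 0"
proof -
  have main: "m \<le> k \<Longrightarrow> \<forall>ys x. length ys = m \<longrightarrow> frob \<phi> (ys @ replicate (k - m) x) = 0" for m
  proof (induction m)
    case 0 then show ?case using diag by simp
  next
    case (Suc m)
    show ?case
    proof (intro allI impI)
      fix ys :: "'a list" and x assume ly: "length ys = Suc m"
      then obtain zs y where ys: "ys = zs @ [y]" by (metis length_Suc_conv_rev)
      have lz: "length zs = m" using ly ys by simp
      obtain P where P: "\<forall>t. frob \<phi> (zs @ replicate (k - m) (x + t *\<^sub>R y)) = poly P (of_real t)"
        "coeff P 1 = of_nat (k - m) * frob \<phi> (zs @ y # replicate (k - m - 1) x)"
        using frob_expand[OF lin, of zs "k - m" x y] by blast
      have IH: "\<forall>ys x. length ys = m \<longrightarrow> frob \<phi> (ys @ replicate (k - m) x) = 0"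
        using Suc.IH Suc.prems by simp
      have "\<forall>t\<in>UNIV. poly P (of_real t) = 0"
      proof
        fix t :: real
        have "frob \<phi> (zs @ replicate (k - m) (x + t *\<^sub>R y)) = 0" using IH lz by blast
        then show "poly P (of_real t) = 0" using P(1) by simp
      qed
      then have "P = 0" by (intro poly_zero_real[of UNIV]) (simp_all add: infinite_UNIV_char_0)
      then have "of_nat (k - m) * frob \<phi> (zs @ y # replicate (k - m - 1) x) = 0" using P(2) by simp
      then have "frob \<phi> (zs @ y # replicate (k - m - 1) x) = 0"
        by (rule ofnat_mult_eq0) (use Suc.prems in simp)
      moreover have "ys @ replicate (k - Suc m) x = zs @ y # replicate (k - m - 1) x" using ys by simp
      ultimately show "frob \<phi> (ys @ replicate (k - Suc m) x) = 0" by (simp only:)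
    qed
  qed
  assume "length xs = k"
  then show ?thesis using main[of k] by (simp del: frob.simps)
qed




lemma fact_ff: "j \<le> k \<Longrightarrow> fact k = ff j k * fact (k - j)"
proof (induction j arbitrary: k)
  case 0 then show ?case by (simp add: ff_def)
next
  case (Suc j)
  then obtain k' where k: "k = Suc k'" by (cases k) auto
  then show ?case using Suc.IH[of k'] Suc.prems by (simp add: ff_Suc algebra_simps)
qed

lemma exp_series_nth_ext:
  fixes f :: "'b::{comm_ring_1,real_algebra_1} fps"
  assumes f0: "f $ 0 = 0" and N: "n \<le> N"
  shows "fps_exp_series f $ n = (\<Sum>m\<le>N. scaleR (1 / fact m) ((f ^ m) $ n))"
proof -
  have "fps_exp_series f $ n = (\<Sum>m\<le>n. scaleR (1 / fact m) ((f ^ m) $ n))"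
    by (simp add: fps_exp_series_def)
  also have "\<dots> = (\<Sum>m\<le>N. scaleR (1 / fact m) ((f ^ m) $ n))"
    by (rule sum.mono_neutral_left) (use N startsby_zero_power_prefix[OF f0] in auto)
  finally show ?thesis .
qed

lemma exp_series_nth: "fps_exp_series f $ n = (\<Sum>m\<le>n. scaleR (1 / fact m) ((f ^ m) $ n))"
  by (simp add: fps_exp_series_def)

lemma exp_series_deriv:
  fixes f :: "'b::{comm_ring_1,real_algebra_1} fps"
  assumes f0: "f $ 0 = 0"
  shows "of_nat (Suc k) * fps_exp_series f $ Suc k = (fps_deriv f * fps_exp_series f) $ k"
proof -
  have "of_nat (Suc k) * fps_exp_series f $ Suc k
      = (\<Sum>m\<le>Suc k. scaleR (1 / fact m) (of_nat (Suc k) * (f ^ m) $ Suc k))"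
    unfolding exp_series_nth sum_distrib_left mult_scaleR_right ..
  also have "\<dots> = (\<Sum>m\<le>Suc k. scaleR (1 / fact m) ((of_nat m * (fps_deriv f * f ^ (m - 1))) $ k))"
  proof (rule sum.cong[OF refl])
    fix m
    have "of_nat (Suc k) * (f ^ m) $ Suc k = fps_deriv (f ^ m) $ k" by simp
    also have "\<dots> = (of_nat m * (fps_deriv f * f ^ (m - 1))) $ k"
      by (simp only: fps_deriv_power' mult.assoc)
    finally show "scaleR (1 / fact m) (of_nat (Suc k) * (f ^ m) $ Suc k)
        = scaleR (1 / fact m) ((of_nat m * (fps_deriv f * f ^ (m - 1))) $ k)" by simp
  qed
  also have "\<dots> = (\<Sum>m\<le>k. scaleR (1 / fact m) ((fps_deriv f * f ^ m) $ k))"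
  proof -
    have c: "scaleR (1 / fact (Suc m)) ((of_nat (Suc m) * g) $ k) = scaleR (1 / fact m) (g $ k)"
      for m and g :: "'b fps"
    proof -
      have "(of_nat (Suc m) * g) $ k = real (Suc m) *\<^sub>R g $ k"
        by (simp add: fps_of_nat scaleR_conv_of_real del: of_nat_Suc)
      then show ?thesis by (simp add: fact_Suc del: of_nat_Suc)
    qed
    show ?thesis unfolding sum.atMost_Suc_shift by (simp only: c) simp
  qed
  also have "\<dots> = (fps_deriv f * fps_exp_series f) $ k"
  proof -
    have "(fps_deriv f * fps_exp_series f) $ k
        = (\<Sum>j=0..k. fps_deriv f $ j * (\<Sum>m\<le>k. scaleR (1 / fact m) ((f ^ m) $ (k - j))))"
      unfolding fps_mult_nth by (intro sum.cong refl) (simp add: exp_series_nth_ext[OF f0, of _ k])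
    also have "\<dots> = (\<Sum>m\<le>k. scaleR (1 / fact m) (\<Sum>j=0..k. fps_deriv f $ j * (f ^ m) $ (k - j)))"
      by (simp add: sum_distrib_left mult_scaleR_right scaleR_sum_right sum.swap[of _ "{0..k}"])
    finally show ?thesis by (simp add: fps_mult_nth)
  qed
  finally show ?thesis .
qed

lemma ln_series_0: "phi_ln_series \<phi> a $ 0 = 0"
  by (simp add: phi_ln_series_def)

lemma ln_series_deriv:
  fixes \<phi> :: "'a::{comm_ring_1,real_algebra_1} \<Rightarrow> 'b::{comm_ring_1,real_algebra_1}"
  assumes lin: "linear \<phi>"
  shows "fps_deriv (phi_ln_series \<phi> a) $ j = (-1) ^ j * \<phi> (a ^ Suc j)"
proof -
  have "fps_deriv (phi_ln_series \<phi> a) $ j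
      = of_nat (Suc j) * (((-1) ^ (j + 2) / real (Suc j)) *\<^sub>R \<phi> (a ^ Suc j))"
    by (simp add: phi_ln_series_def linear_cmul[OF lin])
  also have "\<dots> = of_real (real (Suc j) * ((-1) ^ (j + 2) / real (Suc j))) * \<phi> (a ^ Suc j)"
    by (simp only: scaleR_conv_of_real of_real_mult of_real_of_nat_eq mult.assoc)
  also have "\<dots> = of_real ((-1) ^ j) * \<phi> (a ^ Suc j)" by simp
  also have "\<dots> = (-1) ^ j * \<phi> (a ^ Suc j)" by simp
  finally show ?thesis .
qed

lemma char_fun_ode:
  fixes \<phi> :: "'a::{comm_ring_1,real_algebra_1} \<Rightarrow> 'b::{comm_ring_1,real_algebra_1}"
  assumes lin: "linear \<phi>"
  shows "of_nat (Suc k) * char_fun \<phi> a $ Suc k = (\<Sum>j\<le>k. (-1) ^ j * \<phi> (a ^ Suc j) * char_fun \<phi> a $ (k - j))"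
  unfolding char_fun_def exp_series_deriv[OF ln_series_0] fps_mult_nth ln_series_deriv[OF lin]
  by (simp add: atLeast0AtMost)

lemma char_fun_0: "char_fun \<phi> a $ 0 = 1"
  by (simp add: char_fun_def fps_exp_series_def)

lemma char_fun_frob:
  fixes \<phi> :: "'a::{comm_ring_1,real_algebra_1} \<Rightarrow> 'b::{comm_ring_1,real_algebra_1}"
  assumes lin: "linear \<phi>"
  shows "of_nat (fact k) * char_fun \<phi> a $ k = frob \<phi> (replicate k a)"
proof (induction k rule: less_induct)
  case (less k)
  show ?case
  proof (cases k)
    case 0 then show ?thesis by (simp add: char_fun_0)
  next
    case (Suc k')
    have "of_nat (fact k) * char_fun \<phi> a $ k
        = of_nat (fact k') * (of_nat (Suc k') * char_fun \<phi> a $ Suc k')"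
      by (simp add: Suc algebra_simps)
    also have "\<dots> = (\<Sum>j\<le>k'. (-1) ^ j * of_nat (ff j k') * \<phi> (a * a ^ j) * (of_nat (fact (k' - j)) * char_fun \<phi> a $ (k' - j)))"
      unfolding char_fun_ode[OF lin] sum_distrib_left
    proof (rule sum.cong[OF refl])
      fix j assume "j \<in> {..k'}"
      then have "fact k' = ff j k' * fact (k' - j)" by (intro fact_ff) simp
      then show "of_nat (fact k') * ((-1) ^ j * \<phi> (a ^ Suc j) * char_fun \<phi> a $ (k' - j))
          = (-1) ^ j * of_nat (ff j k') * \<phi> (a * a ^ j) * (of_nat (fact (k' - j)) * char_fun \<phi> a $ (k' - j))"
        by (simp add: algebra_simps)
    qed
    also have "\<dots> = (\<Sum>j\<le>k'. (-1) ^ j * of_nat (ff j k') * \<phi> (a * a ^ j) * frob \<phi> (replicate (k' - j) a))"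
      using less.IH Suc by (intro sum.cong refl) simp
    also have "\<dots> = frob \<phi> (replicate k a)"
      unfolding Suc replicate_Suc frob_b_rep ..
    finally show ?thesis .
  qed
qed




lemma psi_zero_iff:
  fixes \<phi> :: "'a::{comm_ring_1,real_algebra_1} \<Rightarrow> 'b::{comm_ring_1,real_algebra_1}"
  assumes lin: "linear \<phi>"
  shows "char_fun \<phi> a $ k = 0 \<longleftrightarrow> frob \<phi> (replicate k a) = 0"
proof
  assume "char_fun \<phi> a $ k = 0" then show "frob \<phi> (replicate k a) = 0"
    using char_fun_frob[OF lin, of k a] by simp
next
  assume "frob \<phi> (replicate k a) = 0"
  then have "of_nat (fact k) * char_fun \<phi> a $ k = 0" using char_fun_frob[OF lin, of k a] by simp
  then show "char_fun \<phi> a $ k = 0" by (rule ofnat_mult_eq0) simp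
qed

lemma fps_poly_ex:
  fixes f :: "'b::comm_ring_1 fps"
  assumes "\<forall>k>n. f $ k = 0"
  shows "\<exists>p. f = fps_of_poly p \<and> degree p \<le> n"
proof -
  define p where "p = Poly (map (fps_nth f) [0..<Suc n])"
  have c: "coeff p k = f $ k" for k
  proof (cases "k \<le> n")
    case True then show ?thesis
      by (simp add: p_def nth_default_def del: upt_Suc)
  next
    case False then show ?thesis using assms
      by (simp add: p_def nth_default_def del: upt_Suc)
  qed
  have "f = fps_of_poly p" by (rule fps_ext) (simp add: c)
  moreover have "degree p \<le> n" by (rule degree_le) (use assms c in simp)
  ultimately show ?thesis by blast
qed

theorem mainTheorem4:
  fixes \<phi> :: "'a::{comm_ring_1,real_algebra_1} \<Rightarrow> 'b::{comm_ring_1,real_algebra_1}"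
    and n :: nat
  assumes "connected_alg TYPE('b)"
    and "n \<ge> 1"
    and "linear \<phi>"
  shows "((\<forall>a. \<exists>p. char_fun \<phi> a = fps_of_poly p \<and> degree p \<le> n) \<and>
          (\<exists>a p. char_fun \<phi> a = fps_of_poly p \<and> degree p = n))
         \<longleftrightarrow> frobenius_hom n \<phi>"
proof
  note lin = assms(3)
  assume H: "(\<forall>a. \<exists>p. char_fun \<phi> a = fps_of_poly p \<and> degree p \<le> n) \<and>
          (\<exists>a p. char_fun \<phi> a = fps_of_poly p \<and> degree p = n)"
  have psi0: "char_fun \<phi> a $ k = 0" if "k > n" for a k
  proof -
    obtain p where "char_fun \<phi> a = fps_of_poly p" "degree p \<le> n" using H by blast
    then show ?thesis using that by (simp add: coeff_eq_0)
  qed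
  have Z: "frob \<phi> xs = 0" if "length xs \<ge> n + 1" for xs
  proof (rule frob_polar[OF lin _ refl])
    show "\<forall>x. frob \<phi> (replicate (length xs) x) = 0"
      using psi0 psi_zero_iff[OF lin] that by simp
  qed
  have "(\<Prod>i\<le>n. \<phi> 1 - of_nat i) = 0"
    using Z[of "replicate (Suc n) 1"] frob_rep_one[of \<phi> "Suc n"]
    by (simp add: lessThan_Suc_atMost del: frob.simps replicate.simps)
  then obtain j where j: "j \<le> n" "\<phi> 1 = of_nat j"
    using assms(1) unfolding connected_alg_def by blast
  obtain a0 p0 where a0: "char_fun \<phi> a0 = fps_of_poly p0" "degree p0 = n" using H by blast
  have "j = n"
  proof (rule ccontr)
    assume "j \<noteq> n"
    then have jn: "real j - real n \<noteq> 0" using j by simp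
    have "(\<phi> 1 - of_nat n) * frob \<phi> (replicate n a0) = 0"
      using Z[of "1 # replicate n a0"] frob_one_head[of \<phi> "replicate n a0"] by (simp del: frob.simps)
    then have "of_real (real j - real n) * frob \<phi> (replicate n a0) = 0" using j by simp
    then have "frob \<phi> (replicate n a0) = 0" using jn by (rule ofreal_mult_eq0)
    then have "coeff p0 n = 0" using psi_zero_iff[OF lin, of a0 n] a0 by simp
    moreover have "p0 \<noteq> 0" using a0 assms(2) by auto
    ultimately show False using a0(2) leading_coeff_0_iff by metis
  qed
  then show "frobenius_hom n \<phi>" unfolding frobenius_hom_def using j Z by simp
next
  note lin = assms(3)
  assume F: "frobenius_hom n \<phi>"
  then have one: "\<phi> 1 = of_nat n" and Z: "\<And>xs. length xs \<ge> n + 1 \<Longrightarrow> frob \<phi> xs = 0"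
    unfolding frobenius_hom_def by auto
  have ex: "\<exists>p. char_fun \<phi> a = fps_of_poly p \<and> degree p \<le> n" for a
    by (rule fps_poly_ex) (use Z psi_zero_iff[OF lin] in auto)
  obtain p where p: "char_fun \<phi> 1 = fps_of_poly p" "degree p \<le> n" using ex by blast
  have "frob \<phi> (replicate n 1) = of_nat (fact n)"
  proof -
    have "frob \<phi> (replicate n 1) = of_nat (ff n n)"
      unfolding frob_rep_one one ff_def by (simp add: of_nat_diff)
    also have "ff n n = fact n" using fact_ff[of n n] by simp
    finally show ?thesis .
  qed
  then have "of_nat (fact n) * (char_fun \<phi> 1 $ n - 1) = 0"
    using char_fun_frob[OF lin, of n 1] by (simp add: algebra_simps)
  then have "char_fun \<phi> 1 $ n - 1 = 0" by (rule ofnat_mult_eq0) simp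
  then have "char_fun \<phi> 1 $ n = 1" by simp
  then have "coeff p n \<noteq> 0" using p(1) by simp
  then have "degree p = n" using p(2) le_degree by (metis le_antisym)
  then show "(\<forall>a. \<exists>p. char_fun \<phi> a = fps_of_poly p \<and> degree p \<le> n) \<and>
          (\<exists>a p. char_fun \<phi> a = fps_of_poly p \<and> degree p = n)"
    using ex p(1) by blast
qed


end
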